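(* Let $H$ be an additive subgroup of $\mathbb{R}^{n}$ with complex dimension $\widetilde{\mathrm{dim}}(H)=p+ir$. If $p+r<n$, then for every $u\in\mathbb{R}^{n}$ the group $H+\mathbb{Z}u$ is not dense in $\mathbb{R}^{n}$.
   Context: For an additive subgroup $G$ of $\mathbb{R}^n$, $\widetilde{\mathrm{dim}}(G):=p+i(q-p)$ where $p=\max\{\dim V: V\text{ a vector subspace of }\mathbb{R}^n,\ V\subset G\}$ and $q=\dim\mathrm{vect}(G)$, $\mathrm{vect}(G)$ being the real span of $G$. *)

theory Defs
  imports "HOL-Analysis.Analysis"
begin

definition additive_subgroup :: "'a::real_vector set \<Rightarrow> bool" where
  "additive_subgroup G \<longleftrightarrow> 0 \<in> G \<and> (\<forall>x\<in>G. \<forall>y\<in>G. x + y \<in> G) \<and> (\<forall>x\<in>G. - x \<in> G)"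

definition subspace_dim :: "'a::euclidean_space set \<Rightarrow> nat" where
  "subspace_dim G = Max {dim V | V. subspace V \<and> V \<subseteq> G}"

definition span_dim :: "'a::euclidean_space set \<Rightarrow> nat" where
  "span_dim G = dim (span G)"

definition cdim :: "'a::euclidean_space set \<Rightarrow> complex" where
  "cdim G = of_nat (subspace_dim G) + \<i> * (of_nat (span_dim G) - of_nat (subspace_dim G))"

end

theory Submission
  imports Defs
begin

theorem corollary1p7:
  fixes H :: "(real ^ 'n) set" and p r :: nat
  assumes "additive_subgroup H"
    and "cdim H = of_nat p + \<i> * of_nat r"
    and "p + r < CARD('n)"
  shows "\<forall>u :: real ^ 'n. closure {h + of_int k *\<^sub>R u | h k. h \<in> H} \<noteq> UNIV"
proof
  fix u :: "real ^ 'n"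
  have "Re (cdim H) = p" "Im (cdim H) = r" using assms(2) by simp_all
  hence "subspace_dim H = p" "real (span_dim H) - real (subspace_dim H) = r"
    by (simp_all add: cdim_def)
  hence "span_dim H = p + r" by linarith
  hence dH: "dim H < DIM(real ^ 'n)" using assms(3) by (simp add: span_dim_def)
  then obtain w :: "real ^ 'n" where w: "w \<noteq> 0" "\<And>y. y \<in> span H \<Longrightarrow> orthogonal w y"
    using orthogonal_to_subspace_exists[OF dH] by metis
  have wH: "w \<bullet> h = 0" if "h \<in> H" for h
    using w(2)[OF span_base[OF that]] by (simp add: orthogonal_def)
  have ww: "w \<bullet> w \<noteq> 0" using w(1) by simp
  define c where "c = w \<bullet> u"
  let ?S = "{h + of_int k *\<^sub>R u | h k. h \<in> H}"
  have Sw: "w \<bullet> x = of_int k * c" if "x = h + of_int k *\<^sub>R u" "h \<in> H" for x h k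
    using that wH[OF that(2)] by (simp add: inner_add_right c_def)
  show "closure ?S \<noteq> UNIV"
  proof (cases "c = 0")
    case True
    have "closure ?S \<subseteq> {x. w \<bullet> x = 0}"
    proof (rule closure_minimal)
      show "?S \<subseteq> {x. w \<bullet> x = 0}" using Sw True by fastforce
      show "closed {x. w \<bullet> x = 0}"
        by (rule closed_Collect_eq) (intro continuous_intros)+
    qed
    thus ?thesis using ww by blast
  next
    case False
    have "closure ?S \<subseteq> {x. sin (pi * (w \<bullet> x) / c) = 0}"
    proof (rule closure_minimal)
      show "?S \<subseteq> {x. sin (pi * (w \<bullet> x) / c) = 0}"
      proof
        fix x assume "x \<in> ?S"
        then obtain h k where "x = h + of_int k *\<^sub>R u" "h \<in> H" by blast
        hence "pi * (w \<bullet> x) / c = of_int k * pi" using False Sw by simp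
        thus "x \<in> {x. sin (pi * (w \<bullet> x) / c) = 0}" by (simp add: sin_zero_iff_int2)
      qed
      show "closed {x. sin (pi * (w \<bullet> x) / c) = 0}"
        by (rule closed_Collect_eq) (auto intro!: continuous_intros simp: False)
    qed
    moreover define z where "z = (c / (2 * (w \<bullet> w))) *\<^sub>R w"
    have "w \<bullet> z = c / 2" using ww by (simp add: z_def)
    hence "pi * (w \<bullet> z) / c = pi / 2" using False by (simp add: field_simps)
    hence "sin (pi * (w \<bullet> z) / c) = 1" by (simp only: sin_pi_half)
    hence "z \<notin> {x. sin (pi * (w \<bullet> x) / c) = 0}" by simp
    ultimately have "z \<notin> closure ?S" by (meson subsetD)
    thus ?thesis by (metis UNIV_I)
  qed
qed

end
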